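(* Let $p\geq 2$ and let $h\in C^2(\mathbb{R}^n)$ be nonnegative, positively homogeneous of degree $p$, and such that there are constants $0<\lambda\le\Lambda$ with $$\lambda |v|^2\leq \langle D^2h(x)v,v\rangle\leq \Lambda |v|^2\qquad\text{for all } x\in S^{n-1},\ v\in\mathbb{R}^n.$$ Let $T$ be an $h$-monotone map with $T\in L^{p-1}_{\mathrm{loc}}(\mathbb{R}^n)$, let $A\in\mathbb{R}^{n\times n}$, $b\in\mathbb{R}^n$, $0<\beta<1$, and set $u(x)=Tx-Ax-b$. Then there are constants $C(n,p,\beta)>0$, $K_1>0$ depending only on $n,p,\lambda,\Lambda,\|A\|$, and $K_2>0$ depending only on $n,p,\lambda,\Lambda,\|A\|,\beta$, such that for each $x_0\in\mathbb{R}^n$ and $R>0$: $$\sup_{x\in B_{\beta R}(x_0)}|u(x)|\leq \begin{cases} K_1\,R\left(R^{-(p-1)}\fint_{B_R(x_0)}|u(x)|^{p-1}dx\right)^{1/(n+p-1)} & \text{if } \left(\fint_{B_R(x_0)}|u|^{p-1}dx\right)^{1/(p-1)}\leq C(n,p,\beta)R,\\[2mm] K_2\,R\left(R^{-(p-1)}\fint_{B_R(x_0)}|u(x)|^{p-1}dx\right)^{1/(p-1)} & \text{if } \left(\fint_{B_R(x_0)}|u|^{p-1}dx\right)^{1/(p-1)}\geq C(n,p,\beta)R.\end{cases}$$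
   Context: A multivalued map $T:\mathbb{R}^n\to\mathcal P(\mathbb{R}^n)$ is called $h$-monotone if $h(x-\xi)+h(y-\zeta)\leq h(x-\zeta)+h(y-\xi)$ for all $x,y\in\mathrm{dom}(T)=\{x: T(x)\neq\emptyset\}$ and all $\xi\in T(x)$, $\zeta\in T(y)$. For the costs $h$ considered, such maps are single-valued almost everywhere, so $T$ is regarded as an a.e. defined function $\mathbb{R}^n\to\mathbb{R}^n$, and $T\in L^{p-1}_{\mathrm{loc}}$ refers to this function. $\fint_B$ denotes the average over $B$, $B_r(x)$ the open ball of radius $r$ centered at $x$, $\|A\|$ the operator norm, and the supremum is understood as an essential supremum. *)

theory Defs
  imports "HOL-Analysis.Analysis"
begin

text \<open>h-monotonicity of a multivalued map T (dom T = points with T x nonempty).\<close>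
definition h_monotone :: "('a::real_normed_vector \<Rightarrow> real) \<Rightarrow> ('a \<Rightarrow> 'a set) \<Rightarrow> bool" where
  "h_monotone h T \<longleftrightarrow>
     (\<forall>x y \<xi> \<zeta>. \<xi> \<in> T x \<longrightarrow> \<zeta> \<in> T y \<longrightarrow>
        h (x - \<xi>) + h (y - \<zeta>) \<le> h (x - \<zeta>) + h (y - \<xi>))"

definition C2_with :: "(real^'n \<Rightarrow> real) \<Rightarrow> (real^'n \<Rightarrow> real^'n) \<Rightarrow> (real^'n \<Rightarrow> real^'n^'n) \<Rightarrow> bool" where
  "C2_with h g H \<longleftrightarrow>
     (\<forall>x. (h has_derivative (\<lambda>v. g x \<bullet> v)) (at x)) \<and>
     (\<forall>x. (g has_derivative (\<lambda>v. H x *v v)) (at x)) \<and>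
     continuous_on UNIV H"

definition avg_int :: "('a::euclidean_space) set \<Rightarrow> ('a \<Rightarrow> real) \<Rightarrow> real" where
  "avg_int B f = (LINT x:B|lebesgue. f x) / measure lebesgue B"

text \<open>T in L^q_loc (as an a.e. defined function t).\<close>
definition Lloc :: "real \<Rightarrow> ('a::euclidean_space \<Rightarrow> 'b::real_normed_vector) \<Rightarrow> bool" where
  "Lloc q t \<longleftrightarrow> t \<in> borel_measurable lebesgue \<and>
     (\<forall>K. compact K \<longrightarrow> set_integrable lebesgue K (\<lambda>x. norm (t x) powr q))"

end

theory Submission
  imports Defs
begin


lemma line_deriv_h:
  fixes h :: "'a::real_inner \<Rightarrow> real"
  assumes "\<And>x. (h has_derivative (\<lambda>v. g x \<bullet> v)) (at x)"
  shows "((\<lambda>t. h (c + t *\<^sub>R d)) has_real_derivative (g (c + t *\<^sub>R d) \<bullet> d)) (at t)"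
proof -
  have l: "((\<lambda>t. c + t *\<^sub>R d) has_derivative (\<lambda>s. s *\<^sub>R d)) (at t)"
    by (auto intro!: derivative_eq_intros)
  have "((\<lambda>t. h (c + t *\<^sub>R d)) has_derivative (\<lambda>s. g (c + t *\<^sub>R d) \<bullet> (s *\<^sub>R d))) (at t)"
    using diff_chain_at[OF l assms] by (simp add: o_def)
  then show ?thesis
    unfolding has_field_derivative_def by (rule has_derivative_eq_rhs) (auto simp: fun_eq_iff)
qed

lemma line_deriv_g:
  fixes g :: "real^'n \<Rightarrow> real^'n"
  assumes "\<And>x. (g has_derivative (\<lambda>v. H x *v v)) (at x)"
  shows "((\<lambda>s. g (c + s *\<^sub>R v) \<bullet> d) has_real_derivative ((H (c + s *\<^sub>R v) *v v) \<bullet> d)) (at s)"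
proof -
  have l: "((\<lambda>t. c + t *\<^sub>R v) has_derivative (\<lambda>s. s *\<^sub>R v)) (at s)"
    by (auto intro!: derivative_eq_intros)
  have "((\<lambda>t. g (c + t *\<^sub>R v)) has_derivative (\<lambda>r. H (c + s *\<^sub>R v) *v (r *\<^sub>R v))) (at s)"
    using diff_chain_at[OF l assms] by (simp add: o_def)
  then have "((\<lambda>t. g (c + t *\<^sub>R v) \<bullet> d) has_derivative (\<lambda>r. (H (c + s *\<^sub>R v) *v (r *\<^sub>R v)) \<bullet> d)) (at s)"
    by (auto intro!: derivative_eq_intros)
  then show ?thesis
    unfolding has_field_derivative_def by (rule has_derivative_eq_rhs) (auto simp: fun_eq_iff matrix_vector_mult_scaleR)
qed

lemma mono_step:
  fixes h :: "real^'n \<Rightarrow> real"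
  assumes C2: "C2_with h g H" and hm: "h_monotone h T"
    and xi: "\<xi> \<in> T x" and ze: "\<zeta> \<in> T y" and yx: "y \<noteq> x"
  shows "\<exists>z. z \<noteq> 0 \<and> (H z *v (y - x)) \<bullet> (\<zeta> - \<xi>) \<ge> 0"
proof -
  define a where "a = x - \<zeta>"
  define v where "v = y - x"
  define d where "d = \<zeta> - \<xi>"
  have v0: "v \<noteq> 0" using yx by (simp add: v_def)
  have hd: "\<And>x. (h has_derivative (\<lambda>v. g x \<bullet> v)) (at x)"
    and gd: "\<And>x. (g has_derivative (\<lambda>v. H x *v v)) (at x)"
    using C2 by (auto simp: C2_with_def)
  have ineq: "h (x - \<xi>) + h (y - \<zeta>) \<le> h (x - \<zeta>) + h (y - \<xi>)"
    using hm xi ze by (auto simp: h_monotone_def)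
  have e1: "x - \<xi> = a + d" "y - \<zeta> = a + v" "y - \<xi> = (a + v) + d" "x - \<zeta> = a"
    by (auto simp: a_def d_def v_def algebra_simps)
  define \<phi> where "\<phi> t = h ((a + v) + t *\<^sub>R d) - h (a + t *\<^sub>R d)" for t
  have "\<And>t. (\<phi> has_real_derivative (g ((a + v) + t *\<^sub>R d) \<bullet> d - g (a + t *\<^sub>R d) \<bullet> d)) (at t)"
    unfolding \<phi>_def by (intro derivative_intros line_deriv_h[OF hd])
  then obtain t0 where "\<phi> 1 - \<phi> 0 = (1 - 0) * (g ((a + v) + t0 *\<^sub>R d) \<bullet> d - g (a + t0 *\<^sub>R d) \<bullet> d)"
    using MVT2[of 0 1 \<phi>] by force
  moreover have "\<phi> 1 - \<phi> 0 \<ge> 0" using ineq unfolding e1 \<phi>_def by simp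
  ultimately have g0: "g ((a + t0 *\<^sub>R d) + 1 *\<^sub>R v) \<bullet> d - g ((a + t0 *\<^sub>R d) + 0 *\<^sub>R v) \<bullet> d \<ge> 0"
    by (simp add: algebra_simps)
  define c where "c = a + t0 *\<^sub>R d"
  define \<psi> where "\<psi> s = g (c + s *\<^sub>R v) \<bullet> d" for s
  have dpsi: "\<And>s. (\<psi> has_real_derivative ((H (c + s *\<^sub>R v) *v v) \<bullet> d)) (at s)"
    unfolding \<psi>_def by (rule line_deriv_g[OF gd])
  have psi: "\<psi> 1 - \<psi> 0 \<ge> 0" using g0 by (simp add: \<psi>_def c_def)
  have uniq: "c + s *\<^sub>R v \<noteq> 0" if "c + s0 *\<^sub>R v = 0" "s \<noteq> s0" for s s0
  proof
    assume "c + s *\<^sub>R v = 0"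
    moreover have "(s - s0) *\<^sub>R v = (c + s *\<^sub>R v) - (c + s0 *\<^sub>R v)" by (simp add: algebra_simps)
    ultimately have "(s - s0) *\<^sub>R v = 0" using that(1) by simp
    with that(2) v0 show False by simp
  qed
  have "\<exists>s. c + s *\<^sub>R v \<noteq> 0 \<and> (H (c + s *\<^sub>R v) *v v) \<bullet> d \<ge> 0"
  proof (cases "\<exists>s0. 0 < s0 \<and> s0 < 1 \<and> c + s0 *\<^sub>R v = 0")
    case True
    then obtain s0 where s0: "0 < s0" "s0 < 1" "c + s0 *\<^sub>R v = 0" by blast
    obtain s1 where s1: "0 < s1" "s1 < s0" "\<psi> s0 - \<psi> 0 = (s0 - 0) * ((H (c + s1 *\<^sub>R v) *v v) \<bullet> d)"
      using MVT2[of 0 s0 \<psi>, OF s0(1) dpsi] by blast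
    obtain s2 where s2: "s0 < s2" "s2 < 1" "\<psi> 1 - \<psi> s0 = (1 - s0) * ((H (c + s2 *\<^sub>R v) *v v) \<bullet> d)"
      using MVT2[of s0 1 \<psi>, OF s0(2) dpsi] by blast
    have "s0 * ((H (c + s1 *\<^sub>R v) *v v) \<bullet> d) + (1 - s0) * ((H (c + s2 *\<^sub>R v) *v v) \<bullet> d) \<ge> 0"
      using psi s1(3) s2(3) by simp
    then have "(H (c + s1 *\<^sub>R v) *v v) \<bullet> d \<ge> 0 \<or> (H (c + s2 *\<^sub>R v) *v v) \<bullet> d \<ge> 0"
      using s0 by (smt (verit, best) mult_pos_neg)
    moreover have "c + s1 *\<^sub>R v \<noteq> 0" "c + s2 *\<^sub>R v \<noteq> 0"
      using uniq[OF s0(3)] s1 s2 by auto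
    ultimately show ?thesis by blast
  next
    case False
    obtain s1 where s1: "0 < s1" "s1 < 1" "\<psi> 1 - \<psi> 0 = (1 - 0) * ((H (c + s1 *\<^sub>R v) *v v) \<bullet> d)"
      using MVT2[of 0 1 \<psi>, OF _ dpsi] by auto
    then show ?thesis using False psi by auto
  qed
  then show ?thesis unfolding v_def d_def by blast
qed



lemma cont_bil:
  fixes H :: "real^'n \<Rightarrow> real^'n^'n"
  assumes "continuous_on UNIV H"
  shows "isCont (\<lambda>z. (H z *v v) \<bullet> w) x"
proof -
  have c: "(H \<longlongrightarrow> H x) (at x)" using assms
    by (metis continuous_on_def UNIV_I at_within_open open_UNIV)
  show ?thesis unfolding isCont_def matrix_vector_mult_def inner_vec_def
    by (intro tendsto_intros c) 
qed

lemma mixed_diff: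
  fixes h :: "real^'n \<Rightarrow> real"
  assumes C2: "C2_with h g H"
  shows "\<exists>z. norm (z - a) \<le> norm v + norm w \<and>
     h (a + v + w) - h (a + v) - h (a + w) + h a = (H z *v v) \<bullet> w"
proof -
  have hd: "\<And>x. (h has_derivative (\<lambda>v. g x \<bullet> v)) (at x)"
    and gd: "\<And>x. (g has_derivative (\<lambda>v. H x *v v)) (at x)"
    using C2 by (auto simp: C2_with_def)
  define \<phi> where "\<phi> t = h ((a + v) + t *\<^sub>R w) - h (a + t *\<^sub>R w)" for t
  have "\<And>t. (\<phi> has_real_derivative (g ((a + v) + t *\<^sub>R w) \<bullet> w - g (a + t *\<^sub>R w) \<bullet> w)) (at t)"
    unfolding \<phi>_def by (intro derivative_intros line_deriv_h[OF hd])
  then obtain t0 where t0: "0 < t0" "t0 < 1" "\<phi> 1 - \<phi> 0 = (1 - 0) * (g ((a + v) + t0 *\<^sub>R w) \<bullet> w - g (a + t0 *\<^sub>R w) \<bullet> w)"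
    using MVT2[of 0 1 \<phi>] by force
  define c where "c = a + t0 *\<^sub>R w"
  define \<psi> where "\<psi> s = g (c + s *\<^sub>R v) \<bullet> w" for s
  have dpsi: "\<And>s. (\<psi> has_real_derivative ((H (c + s *\<^sub>R v) *v v) \<bullet> w)) (at s)"
    unfolding \<psi>_def by (rule line_deriv_g[OF gd])
  obtain s1 where s1: "0 < s1" "s1 < 1" "\<psi> 1 - \<psi> 0 = (1 - 0) * ((H (c + s1 *\<^sub>R v) *v v) \<bullet> w)"
    using MVT2[of 0 1 \<psi>, OF _ dpsi] by auto
  have "norm (c + s1 *\<^sub>R v - a) \<le> norm v + norm w"
  proof -
    have "norm (c + s1 *\<^sub>R v - a) = norm (t0 *\<^sub>R w + s1 *\<^sub>R v)" by (simp add: c_def)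
    also have "\<dots> \<le> t0 * norm w + s1 * norm v"
      by (rule order_trans[OF norm_triangle_ineq]) (use t0 s1 in simp)
    also have "\<dots> \<le> 1 * norm w + 1 * norm v"
      by (intro add_mono mult_right_mono) (use t0 s1 in auto)
    finally show ?thesis by simp
  qed
  moreover have "h (a + v + w) - h (a + v) - h (a + w) + h a = (H (c + s1 *\<^sub>R v) *v v) \<bullet> w"
    using t0(3) s1(3) by (simp add: \<phi>_def \<psi>_def c_def algebra_simps)
  ultimately show ?thesis by blast
qed

lemma hess_sym:
  fixes h :: "real^'n \<Rightarrow> real"
  assumes C2: "C2_with h g H"
  shows "(H x *v v) \<bullet> w = (H x *v w) \<bullet> v"
proof (rule ccontr)
  assume ne: "(H x *v v) \<bullet> w \<noteq> (H x *v w) \<bullet> v"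
  define F1 where "F1 z = (H z *v v) \<bullet> w" for z
  define F2 where "F2 z = (H z *v w) \<bullet> v" for z
  define \<epsilon> where "\<epsilon> = \<bar>F1 x - F2 x\<bar> / 3"
  have ep: "\<epsilon> > 0" using ne by (simp add: \<epsilon>_def F1_def F2_def)
  have cH: "continuous_on UNIV H" using C2 by (simp add: C2_with_def)
  obtain d1 where d1': "d1 > 0" "\<forall>z. z \<noteq> x \<and> dist z x < d1 \<longrightarrow> dist (F1 z) (F1 x) < \<epsilon>"
  proof -
    have "F1 \<midarrow>x\<rightarrow> F1 x" using cont_bil[OF cH, of x v w] unfolding isCont_def F1_def .
    from metric_LIM_D[OF this ep] show ?thesis using that by blast
  qed
  have d1a: "\<And>z. dist z x < d1 \<Longrightarrow> dist (F1 z) (F1 x) < \<epsilon>"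
  proof -
    fix z assume "dist z x < d1"
    then show "dist (F1 z) (F1 x) < \<epsilon>" using d1' ep by (cases "z = x") auto
  qed
  note d1 = d1'(1) d1a
  obtain d2 where d2': "d2 > 0" "\<forall>z. z \<noteq> x \<and> dist z x < d2 \<longrightarrow> dist (F2 z) (F2 x) < \<epsilon>"
  proof -
    have "F2 \<midarrow>x\<rightarrow> F2 x" using cont_bil[OF cH, of x w v] unfolding isCont_def F2_def .
    from metric_LIM_D[OF this ep] show ?thesis using that by blast
  qed
  have d2a: "\<And>z. dist z x < d2 \<Longrightarrow> dist (F2 z) (F2 x) < \<epsilon>"
  proof -
    fix z assume "dist z x < d2"
    then show "dist (F2 z) (F2 x) < \<epsilon>" using d2' ep by (cases "z = x") auto
  qed
  note d2 = d2'(1) d2a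
  define s where "s = min d1 d2 / (2 * (norm v + norm w + 1))"
  have "norm v + norm w + 1 > 0" by (smt (verit) norm_ge_zero)
  then have s0: "s > 0" using d1 d2 unfolding s_def by (intro divide_pos_pos) auto
  have sb: "s * (norm v + norm w) < min d1 d2"
  proof -
    have "s * (norm v + norm w) \<le> s * (norm v + norm w + 1)" using s0 by simp
    also have "\<dots> = min d1 d2 / 2" unfolding s_def
      using \<open>norm v + norm w + 1 > 0\<close> by (simp add: field_simps)
    also have "\<dots> < min d1 d2" using d1(1) d2(1) by linarith
    finally show ?thesis .
  qed
  obtain z1 where z1: "norm (z1 - x) \<le> norm (s *\<^sub>R v) + norm (s *\<^sub>R w)"
    "h (x + s *\<^sub>R v + s *\<^sub>R w) - h (x + s *\<^sub>R v) - h (x + s *\<^sub>R w) + h x = (H z1 *v (s *\<^sub>R v)) \<bullet> (s *\<^sub>R w)"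
    using mixed_diff[OF C2, of x "s *\<^sub>R v" "s *\<^sub>R w"] by blast
  obtain z2 where z2: "norm (z2 - x) \<le> norm (s *\<^sub>R w) + norm (s *\<^sub>R v)"
    "h (x + s *\<^sub>R w + s *\<^sub>R v) - h (x + s *\<^sub>R w) - h (x + s *\<^sub>R v) + h x = (H z2 *v (s *\<^sub>R w)) \<bullet> (s *\<^sub>R v)"
    using mixed_diff[OF C2, of x "s *\<^sub>R w" "s *\<^sub>R v"] by blast
  have e1: "(H z1 *v (s *\<^sub>R v)) \<bullet> (s *\<^sub>R w) = s * s * F1 z1"
    by (simp add: F1_def matrix_vector_mult_scaleR)
  have e2: "(H z2 *v (s *\<^sub>R w)) \<bullet> (s *\<^sub>R v) = s * s * F2 z2"
    by (simp add: F2_def matrix_vector_mult_scaleR)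
  have e3: "x + s *\<^sub>R w + s *\<^sub>R v = x + s *\<^sub>R v + s *\<^sub>R w" by (simp add: add_ac)
  have "s * s * F1 z1 = s * s * F2 z2"
    using z1(2) z2(2) unfolding e1 e2 e3 by linarith
  then have eq: "F1 z1 = F2 z2" using s0 by simp
  have nn: "norm (s *\<^sub>R v) + norm (s *\<^sub>R w) = s * (norm v + norm w)"
    using s0 by (simp add: distrib_left)
  have n1: "dist z1 x < d1" "dist z2 x < d2"
    using z1(1) z2(1) sb nn unfolding dist_norm by linarith+
  have "dist (F1 z1) (F1 x) < \<epsilon>" "dist (F2 z2) (F2 x) < \<epsilon>" using d1 d2 n1 by auto
  then show False using eq unfolding \<epsilon>_def dist_real_def by (simp add: abs_if split: if_splits)
qed



lemma vec_eq_by_inner: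
  fixes a b :: "'a::real_inner"
  assumes "\<And>v. a \<bullet> v = b \<bullet> v"
  shows "a = b"
proof -
  have "(a - b) \<bullet> (a - b) = 0" using assms[of "a - b"] by (simp add: inner_diff_left)
  then show ?thesis by simp
qed

lemma g_hom:
  fixes h :: "real^'n \<Rightarrow> real"
  assumes C2: "C2_with h g H" and hom: "\<forall>s>0. \<forall>x. h (s *\<^sub>R x) = s powr p * h x" and s: "s > 0"
  shows "g (s *\<^sub>R x) = s powr (p - 1) *\<^sub>R g x"
proof -
  have hd: "\<And>x. (h has_derivative (\<lambda>v. g x \<bullet> v)) (at x)"
    using C2 by (auto simp: C2_with_def)
  have l: "((\<lambda>y. s *\<^sub>R y) has_derivative (\<lambda>v. s *\<^sub>R v)) (at x)"
    by (auto intro!: derivative_eq_intros)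
  have d1: "((\<lambda>y. h (s *\<^sub>R y)) has_derivative (\<lambda>v. g (s *\<^sub>R x) \<bullet> (s *\<^sub>R v))) (at x)"
    using diff_chain_at[OF l hd] by (simp add: o_def)
  have d2: "((\<lambda>y. s powr p * h y) has_derivative (\<lambda>v. s powr p * (g x \<bullet> v))) (at x)"
    by (auto intro!: derivative_eq_intros hd)
  have eqf: "(\<lambda>y. h (s *\<^sub>R y)) = (\<lambda>y. s powr p * h y)" using hom s by auto
  have "(\<lambda>v. g (s *\<^sub>R x) \<bullet> (s *\<^sub>R v)) = (\<lambda>v. s powr p * (g x \<bullet> v))"
    using has_derivative_unique[OF d1 d2[folded eqf]] .
  then have "\<And>v. (s *\<^sub>R g (s *\<^sub>R x)) \<bullet> v = (s powr p *\<^sub>R g x) \<bullet> v"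
    by (metis inner_scaleR_left inner_scaleR_right)
  then have "s *\<^sub>R g (s *\<^sub>R x) = s powr p *\<^sub>R g x" by (rule vec_eq_by_inner)
  then have "g (s *\<^sub>R x) = (s powr p / s) *\<^sub>R g x" using s
    by (metis (no_types, lifting) divideR_right less_irrefl scaleR_scaleR times_divide_eq_left mult.commute divide_inverse_commute)
  also have "s powr p / s = s powr (p - 1)" using s by (simp add: powr_diff)
  finally show ?thesis .
qed

lemma H_hom:
  fixes h :: "real^'n \<Rightarrow> real"
  assumes C2: "C2_with h g H" and hom: "\<forall>s>0. \<forall>x. h (s *\<^sub>R x) = s powr p * h x" and s: "s > 0"
  shows "H (s *\<^sub>R x) *v v = s powr (p - 2) *\<^sub>R (H x *v v)"
proof -
  have gd: "\<And>x. (g has_derivative (\<lambda>v. H x *v v)) (at x)"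
    using C2 by (auto simp: C2_with_def)
  have l: "((\<lambda>y. s *\<^sub>R y) has_derivative (\<lambda>v. s *\<^sub>R v)) (at x)"
    by (auto intro!: derivative_eq_intros)
  have d1: "((\<lambda>y. g (s *\<^sub>R y)) has_derivative (\<lambda>v. H (s *\<^sub>R x) *v (s *\<^sub>R v))) (at x)"
    using diff_chain_at[OF l gd] by (simp add: o_def)
  have d2: "((\<lambda>y. s powr (p - 1) *\<^sub>R g y) has_derivative (\<lambda>v. s powr (p - 1) *\<^sub>R (H x *v v))) (at x)"
    by (auto intro!: derivative_eq_intros gd)
  have eqf: "(\<lambda>y. g (s *\<^sub>R y)) = (\<lambda>y. s powr (p - 1) *\<^sub>R g y)" using g_hom[OF C2 hom s] by auto
  have "(\<lambda>v. H (s *\<^sub>R x) *v (s *\<^sub>R v)) = (\<lambda>v. s powr (p - 1) *\<^sub>R (H x *v v))"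
    using has_derivative_unique[OF d1 d2[folded eqf]] .
  then have "H (s *\<^sub>R x) *v (s *\<^sub>R v) = s powr (p - 1) *\<^sub>R (H x *v v)" by metis
  then have "s *\<^sub>R (H (s *\<^sub>R x) *v v) = s powr (p - 1) *\<^sub>R (H x *v v)"
    by (simp add: matrix_vector_mult_scaleR)
  then have "H (s *\<^sub>R x) *v v = (s powr (p - 1) / s) *\<^sub>R (H x *v v)" using s
    by (metis (no_types, lifting) divideR_right less_irrefl scaleR_scaleR times_divide_eq_left mult.commute divide_inverse_commute)
  also have "s powr (p - 1) / s = s powr (p - 2)" using s by (simp add: powr_diff power2_eq_square)
  finally show ?thesis .
qed



lemma quad_disc:
  fixes a b c :: real
  assumes q: "\<And>t. 0 \<le> a + 2 * b * t + c * t\<^sup>2" and c: "c \<ge> 0"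
  shows "b\<^sup>2 \<le> a * c"
proof (cases "c = 0")
  case True
  have "b = 0"
  proof (rule ccontr)
    assume b: "b \<noteq> 0"
    have "0 \<le> a + 2 * b * (- (\<bar>a\<bar> + 1) / (2 * b))" using q[of "- (\<bar>a\<bar> + 1) / (2 * b)"] True by simp
    also have "\<dots> = a - (\<bar>a\<bar> + 1)" using b by (simp add: field_simps)
    finally show False by simp
  qed
  then show ?thesis using True by simp
next
  case False
  then have c0: "c > 0" using c by simp
  have "0 \<le> a + 2 * b * (- b / c) + c * (- b / c)\<^sup>2" using q .
  also have "\<dots> = a - b\<^sup>2 / c" using c0 by (simp add: field_simps power2_eq_square)
  finally have "b\<^sup>2 / c \<le> a" by simp
  then show ?thesis using c0 by (simp add: divide_le_eq mult.commute)
qed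

lemma op_bound:
  fixes Q :: "real^'n^'n"
  assumes sym: "\<And>v w. (Q *v v) \<bullet> w = (Q *v w) \<bullet> v"
    and lo: "\<And>v. 0 \<le> (Q *v v) \<bullet> v"
    and up: "\<And>v. (Q *v v) \<bullet> v \<le> L * (norm v)\<^sup>2"
  shows "norm (Q *v v) \<le> L * norm v"
proof -
  have cs: "((Q *v v) \<bullet> w)\<^sup>2 \<le> ((Q *v v) \<bullet> v) * ((Q *v w) \<bullet> w)" for v w
  proof (rule quad_disc)
    fix t :: real
    have "(Q *v (v + t *\<^sub>R w)) \<bullet> (v + t *\<^sub>R w)
        = (Q *v v) \<bullet> v + 2 * ((Q *v v) \<bullet> w) * t + ((Q *v w) \<bullet> w) * t\<^sup>2"
      using sym[of w v]
      by (simp add: matrix_vector_right_distrib matrix_vector_mult_scaleR inner_add_left inner_add_right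
          algebra_simps power2_eq_square)
    then show "0 \<le> (Q *v v) \<bullet> v + 2 * ((Q *v v) \<bullet> w) * t + ((Q *v w) \<bullet> w) * t\<^sup>2"
      using lo[of "v + t *\<^sub>R w"] by simp
  qed (rule lo)
  define u where "u = Q *v v"
  have L0: "L \<ge> 0 \<or> v = 0"
  proof (cases "v = 0")
    case False
    then have "0 < (norm v)\<^sup>2" by simp
    moreover have "0 \<le> L * (norm v)\<^sup>2" using lo[of v] up[of v] by linarith
    ultimately show ?thesis by (simp add: zero_le_mult_iff)
  qed simp
  show ?thesis
  proof (cases "v = 0")
    case True then show ?thesis by simp
  next
    case False
    with L0 have L0: "L \<ge> 0" by simp
    have "(u \<bullet> u)\<^sup>2 \<le> ((Q *v v) \<bullet> v) * ((Q *v u) \<bullet> u)" using cs[of v u] by (simp add: u_def)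
    also have "\<dots> \<le> (L * (norm v)\<^sup>2) * (L * (norm u)\<^sup>2)"
      using lo[of v] up[of v] lo[of u] up[of u] by (intro mult_mono) auto
    finally have "(norm u)\<^sup>2 * (norm u)\<^sup>2 \<le> (L * norm v)\<^sup>2 * (norm u)\<^sup>2"
      by (simp add: power2_norm_eq_inner[symmetric] power2_eq_square algebra_simps)
    then have "(norm u)\<^sup>2 \<le> (L * norm v)\<^sup>2"
      by (cases "u = 0") (simp, metis mult_le_cancel_right norm_ge_zero not_le zero_less_power2 norm_eq_zero)
    then have "norm u \<le> L * norm v" using L0
      by (meson abs_le_square_iff abs_of_nonneg norm_ge_zero mult_nonneg_nonneg order_trans abs_ge_self power2_le_imp_le)
    then show ?thesis by (simp add: u_def)
  qed
qed

lemma mono_unit: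
  fixes h :: "real^'n \<Rightarrow> real"
  assumes C2: "C2_with h g H" and hom: "\<forall>s>0. \<forall>x. h (s *\<^sub>R x) = s powr p * h x"
    and hm: "h_monotone h T"
    and xi: "\<xi> \<in> T x" and ze: "\<zeta> \<in> T y" and yx: "y \<noteq> x"
  shows "\<exists>e. norm e = 1 \<and> (H e *v (y - x)) \<bullet> (\<zeta> - \<xi>) \<ge> 0"
proof -
  obtain z where z: "z \<noteq> 0" "(H z *v (y - x)) \<bullet> (\<zeta> - \<xi>) \<ge> 0"
    using mono_step[OF C2 hm xi ze yx] by blast
  define e where "e = (1 / norm z) *\<^sub>R z"
  have ze: "z = norm z *\<^sub>R e" using z by (simp add: e_def)
  have ne: "norm e = 1" using z by (simp add: e_def)
  have "H z *v (y - x) = norm z powr (p - 2) *\<^sub>R (H e *v (y - x))"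
    using H_hom[OF C2 hom, of "norm z" e "y - x"] z ze by simp
  then have "norm z powr (p - 2) * ((H e *v (y - x)) \<bullet> (\<zeta> - \<xi>)) \<ge> 0" using z by simp
  moreover have "norm z powr (p - 2) > 0" using z by simp
  ultimately have "(H e *v (y - x)) \<bullet> (\<zeta> - \<xi>) \<ge> 0" by (simp add: zero_le_mult_iff)
  then show ?thesis using ne by blast
qed



lemma cone_est:
  fixes Q A :: "real^'n^'n"
  assumes sym: "\<And>v w. (Q *v v) \<bullet> w = (Q *v w) \<bullet> v"
    and lo: "\<And>v. lam * (norm v)\<^sup>2 \<le> (Q *v v) \<bullet> v"
    and up: "\<And>v. (Q *v v) \<bullet> v \<le> Lam * (norm v)\<^sup>2"
    and lam: "0 < lam" "lam \<le> Lam"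
    and key: "(Q *v w) \<bullet> (A *v w + V - U) \<ge> 0"
    and Ab: "\<And>w. norm (A *v w) \<le> M * norm w" and M: "M \<ge> 0"
    and U: "U \<noteq> 0" and rho: "\<rho> > 0"
    and near: "norm (w - \<rho> *\<^sub>R ((1 / norm U) *\<^sub>R U)) < (lam / (2 * Lam)) * \<rho>"
  shows "lam / (3 * Lam) * norm U - 3 / 2 * M * \<rho> \<le> norm V"
proof -
  define e where "e = (1 / norm U) *\<^sub>R U"
  define \<kappa> where "\<kappa> = lam / (2 * Lam)"
  have Lpos: "Lam > 0" using lam by simp
  have k: "0 < \<kappa>" "\<kappa> \<le> 1 / 2" using lam Lpos by (auto simp: \<kappa>_def field_simps)
  have ne: "norm e = 1" using U by (simp add: e_def)
  have Ue: "U = norm U *\<^sub>R e" using U by (simp add: e_def)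
  have lo0: "\<And>v. 0 \<le> (Q *v v) \<bullet> v" using lo lam by (meson order_trans mult_nonneg_nonneg less_imp_le zero_le_power2)
  have opb: "\<And>v. norm (Q *v v) \<le> Lam * norm v" by (rule op_bound[OF sym lo0 up])
  define q where "q = w - \<rho> *\<^sub>R e"
  have q: "norm q < \<kappa> * \<rho>" using near by (simp add: q_def e_def \<kappa>_def)
  have w: "w = \<rho> *\<^sub>R e + q" by (simp add: q_def)
  have "(Q *v w) \<bullet> e = (Q *v e) \<bullet> w" by (rule sym)
  also have "\<dots> = \<rho> * ((Q *v e) \<bullet> e) + (Q *v e) \<bullet> q" by (simp add: w inner_add_right)
  finally have t1: "(Q *v w) \<bullet> e = \<rho> * ((Q *v e) \<bullet> e) + (Q *v e) \<bullet> q" .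
  have "\<bar>(Q *v e) \<bullet> q\<bar> \<le> norm (Q *v e) * norm q" by (rule Cauchy_Schwarz_ineq2)
  also have "\<dots> \<le> Lam * norm q" using opb[of e] ne by (simp add: mult_right_mono)
  also have "\<dots> \<le> Lam * (\<kappa> * \<rho>)" using q Lpos by simp
  also have "\<dots> = \<rho> * lam / 2" using Lpos by (simp add: \<kappa>_def)
  finally have t2: "\<bar>(Q *v e) \<bullet> q\<bar> \<le> \<rho> * lam / 2" .
  have "lam \<le> (Q *v e) \<bullet> e" using lo[of e] ne by simp
  then have "\<rho> * lam \<le> \<rho> * ((Q *v e) \<bullet> e)" using rho by simp
  then have t3: "\<rho> * lam / 2 \<le> (Q *v w) \<bullet> e" using t1 t2 by linarith
  have nw: "norm w \<le> 3 / 2 * \<rho>"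
  proof -
    have "norm w \<le> norm (\<rho> *\<^sub>R e) + norm q" unfolding w by (rule norm_triangle_ineq)
    also have "\<dots> \<le> \<rho> + \<kappa> * \<rho>" using ne rho q by simp
    also have "\<dots> \<le> \<rho> + 1 / 2 * \<rho>" using k rho by simp
    finally show ?thesis by simp
  qed
  have "(Q *v w) \<bullet> U = norm U * ((Q *v w) \<bullet> e)" by (subst Ue) simp
  then have t4: "norm U * (\<rho> * lam / 2) \<le> (Q *v w) \<bullet> U"
    using mult_left_mono[OF t3, of "norm U"] by simp
  have "(Q *v w) \<bullet> U \<le> (Q *v w) \<bullet> (A *v w + V)" using key by (simp add: inner_diff_right)
  also have "\<dots> \<le> norm (Q *v w) * norm (A *v w + V)" by (rule Cauchy_Schwarz_ineq2[THEN abs_le_D1])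
  also have "\<dots> \<le> (Lam * norm w) * (M * norm w + norm V)"
  proof (rule mult_mono)
    show "norm (A *v w + V) \<le> M * norm w + norm V"
      using Ab[of w] norm_triangle_ineq[of "A *v w" V] by linarith
  qed (use opb Lpos in auto)
  also have "\<dots> \<le> (Lam * (3 / 2 * \<rho>)) * (M * (3 / 2 * \<rho>) + norm V)"
    using nw Lpos M rho by (intro mult_mono add_mono mult_left_mono) auto
  finally have "norm U * (\<rho> * lam / 2) \<le> (Lam * (3 / 2 * \<rho>)) * (M * (3 / 2 * \<rho>) + norm V)"
    using t4 by linarith
  then have "(\<rho> * Lam * 3 / 2) * (lam / (3 * Lam) * norm U) \<le> (\<rho> * Lam * 3 / 2) * (3 / 2 * M * \<rho> + norm V)"
    using Lpos by (simp add: field_simps)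
  then have "lam / (3 * Lam) * norm U \<le> 3 / 2 * M * \<rho> + norm V"
    using Lpos rho by (subst (asm) mult_le_cancel_left_pos) (auto intro: mult_pos_pos)
  then show ?thesis by simp
qed



lemma pt_est:
  fixes h :: "real^'n \<Rightarrow> real" and A :: "real^'n^'n"
  assumes C2: "C2_with h g H" and hom: "\<forall>s>0. \<forall>x. h (s *\<^sub>R x) = s powr p * h x"
    and hess: "\<forall>x v. norm x = 1 \<longrightarrow> lam * (norm v)\<^sup>2 \<le> (H x *v v) \<bullet> v \<and> (H x *v v) \<bullet> v \<le> Lam * (norm v)\<^sup>2"
    and lam: "0 < lam" "lam \<le> Lam"
    and hm: "h_monotone h T"
    and tx: "t x \<in> T x" and ty: "t y \<in> T y"
    and M: "onorm (\<lambda>v. A *v v) = M"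
    and U: "t x - A *v x - b \<noteq> 0" and rho: "\<rho> > 0"
    and rhoM: "3 / 2 * M * \<rho> \<le> lam / (6 * Lam) * norm (t x - A *v x - b)"
    and y: "y \<in> ball (x + \<rho> *\<^sub>R ((1 / norm (t x - A *v x - b)) *\<^sub>R (t x - A *v x - b))) (lam / (2 * Lam) * \<rho>)"
  shows "lam / (6 * Lam) * norm (t x - A *v x - b) \<le> norm (t y - A *v y - b)"
proof -
  define U where "U = t x - A *v x - b"
  define V where "V = t y - A *v y - b"
  define e where "e = (1 / norm U) *\<^sub>R U"
  have ne: "norm e = 1" using U by (simp add: e_def U_def)
  have Lpos: "Lam > 0" using lam by simp
  have k: "lam / (2 * Lam) \<le> 1 / 2" using lam Lpos by (auto simp: field_simps)
  have near: "norm ((y - x) - \<rho> *\<^sub>R e) < lam / (2 * Lam) * \<rho>"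
    using y by (simp add: dist_norm e_def U_def norm_minus_commute algebra_simps)
  have yx: "y \<noteq> x"
  proof
    assume "y = x"
    then have "\<rho> < lam / (2 * Lam) * \<rho>" using near ne rho by simp
    also have "\<dots> \<le> 1 / 2 * \<rho>" using k rho by (intro mult_right_mono) auto
    finally show False using rho by simp
  qed
  obtain e' where e': "norm e' = 1" "(H e' *v (y - x)) \<bullet> (t y - t x) \<ge> 0"
    using mono_unit[OF C2 hom hm tx ty yx] by blast
  have Mb: "\<And>w. norm (A *v w) \<le> M * norm w"
    using onorm[OF matrix_vector_mul_bounded_linear[of A]] M by simp
  have M0: "M \<ge> 0" using M onorm_pos_le[OF matrix_vector_mul_bounded_linear[of A]] by simp
  have d: "t y - t x = A *v (y - x) + V - U"
    by (simp add: U_def V_def matrix_vector_mult_diff_distrib algebra_simps)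
  have "lam / (3 * Lam) * norm U - 3 / 2 * M * \<rho> \<le> norm V"
  proof (rule cone_est[where Q = "H e'" and A = A and w = "y - x"])
    show "\<And>v w. (H e' *v v) \<bullet> w = (H e' *v w) \<bullet> v" by (rule hess_sym[OF C2])
    show "\<And>v. lam * (norm v)\<^sup>2 \<le> (H e' *v v) \<bullet> v" using hess e'(1) by blast
    show "\<And>v. (H e' *v v) \<bullet> v \<le> Lam * (norm v)\<^sup>2" using hess e'(1) by blast
    show "0 \<le> (H e' *v (y - x)) \<bullet> (A *v (y - x) + V - U)" using e'(2) d by simp
    show "norm (y - x - \<rho> *\<^sub>R ((1 / norm U) *\<^sub>R U)) < lam / (2 * Lam) * \<rho>"
      using near by (simp add: e_def)
    show "U \<noteq> 0" using U by (simp add: U_def)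
  qed (use lam Mb M0 rho in auto)
  moreover have "lam / (3 * Lam) * norm U = 2 * (lam / (6 * Lam) * norm U)" by simp
  ultimately show ?thesis using rhoM unfolding U_def V_def by linarith
qed



lemma int_lower:
  fixes f :: "real^'n \<Rightarrow> real"
  assumes int: "set_integrable lebesgue (ball x0 R) f" and nn: "\<And>x. f x \<ge> 0"
    and sub: "ball c r \<subseteq> ball x0 R"
    and low: "AE y in lebesgue. y \<in> ball c r \<longrightarrow> k \<le> f y"
  shows "k * measure lebesgue (ball c r) \<le> (LINT x:ball x0 R|lebesgue. f x)"
proof -
  have int2: "set_integrable lebesgue (ball c r) f"
    by (rule set_integrable_subset[OF int _ sub]) simp
  have intk: "set_integrable lebesgue (ball c r) (\<lambda>_. k)"
    unfolding set_integrable_def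
    by (intro integrable_scaleR_left integrable_real_indicator) (auto simp: emeasure_lborel_ball_finite[unfolded infinity_ennreal_def])
  have "k * measure lebesgue (ball c r) = (LINT x:ball c r|lebesgue. k)"
    by (subst set_integral_const) (use emeasure_lborel_ball_finite[of c r] in auto)
  also have "\<dots> \<le> (LINT x:ball c r|lebesgue. f x)"
    by (rule set_integral_mono_AE[OF intk int2]) (use low in auto)
  also have "\<dots> \<le> (LINT x:ball x0 R|lebesgue. f x)"
    unfolding set_lebesgue_integral_def
  proof (rule integral_mono)
    show "integrable lebesgue (\<lambda>x. indicator (ball c r) x *\<^sub>R f x)"
      using int2 by (simp add: set_integrable_def)
    show "integrable lebesgue (\<lambda>x. indicator (ball x0 R) x *\<^sub>R f x)"
      using int by (simp add: set_integrable_def)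
    fix x show "indicator (ball c r) x *\<^sub>R f x \<le> indicator (ball x0 R) x *\<^sub>R f x"
      using sub nn[of x] by (auto simp: indicator_def)
  qed
  finally show ?thesis .
qed

lemma integ_u:
  fixes t :: "real^'n \<Rightarrow> real^'n" and A :: "real^'n^'n"
  assumes L: "Lloc q t" and q: "q \<ge> 1"
  shows "set_integrable lebesgue (ball x0 R) (\<lambda>x. norm (t x - A *v x - b) powr q)"
proof -
  have tm[measurable]: "t \<in> borel_measurable lebesgue" using L by (simp add: Lloc_def)
  have Am0: "(\<lambda>x. A *v x) \<in> borel_measurable borel"
    by (intro borel_measurable_continuous_onI linear_continuous_on matrix_vector_mul_bounded_linear)
  have Am[measurable]: "(\<lambda>x. A *v x) \<in> borel_measurable lebesgue"
    using measurable_completion[of "\<lambda>x. A *v x" lborel borel] Am0 by simp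
  have bm[measurable]: "Measurable.pred lebesgue (\<lambda>x. x \<in> ball x0 R)"
    unfolding pred_def using lmeasurable_ball[of x0 R] by (simp add: fmeasurable_def)
  have ic: "set_integrable lebesgue (cball x0 R) (\<lambda>x. norm (t x) powr q)"
    using L by (simp add: Lloc_def)
  then have ib: "set_integrable lebesgue (ball x0 R) (\<lambda>x. norm (t x) powr q)"
    by (rule set_integrable_subset) auto
  define c where "c = onorm (\<lambda>v. A *v v) * (norm x0 + R) + norm b"
  have cb: "norm (A *v x + b) \<le> c" if "x \<in> ball x0 R" for x
  proof -
    have "norm x \<le> norm x0 + R" using that norm_triangle_ineq2[of x x0]
      by (simp add: dist_norm norm_minus_commute) 
    then have "norm (A *v x) \<le> onorm (\<lambda>v. A *v v) * (norm x0 + R)"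
      using onorm[OF matrix_vector_mul_bounded_linear[of A], of x]
        onorm_pos_le[OF matrix_vector_mul_bounded_linear[of A]]
      by (meson mult_left_mono order_trans)
    then show ?thesis unfolding c_def using norm_triangle_ineq[of "A *v x" b] by linarith
  qed
  have bnd: "norm (t x - A *v x - b) powr q \<le> 2 powr q * (norm (t x) powr q + c powr q)"
    if "x \<in> ball x0 R" for x
  proof -
    have c0: "c \<ge> 0" using cb[OF that] norm_ge_zero order_trans by blast
    have "norm (t x - A *v x - b) \<le> norm (t x) + c"
      using cb[OF that] norm_triangle_ineq4[of "t x" "A *v x + b"] by (simp add: diff_diff_eq)
    also have "\<dots> \<le> 2 * max (norm (t x)) c" by simp
    finally have "norm (t x - A *v x - b) powr q \<le> (2 * max (norm (t x)) c) powr q"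
      using q by (intro powr_mono2) auto
    also have "\<dots> = 2 powr q * max (norm (t x)) c powr q" using c0
      by (simp add: powr_mult)
    also have "\<dots> \<le> 2 powr q * (norm (t x) powr q + c powr q)"
      by (intro mult_left_mono) (auto simp: max_def)
    finally show ?thesis .
  qed
  have i2: "set_integrable lebesgue (ball x0 R) (\<lambda>x. 2 powr q * (norm (t x) powr q + c powr q))"
  proof -
    have ic2: "set_integrable lebesgue (ball x0 R) (\<lambda>x. c powr q)"
      unfolding set_integrable_def
      by (intro integrable_scaleR_left integrable_real_indicator) (auto simp: emeasure_lborel_ball_finite[unfolded infinity_ennreal_def])
    show ?thesis
      by (intro set_integrable_mult_right set_integral_add(1) ib ic2)
  qed
  show ?thesis
  proof (rule set_integrable_bound[OF i2])
    show "set_borel_measurable lebesgue (ball x0 R) (\<lambda>x. norm (t x - A *v x - b) powr q)"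
      unfolding set_borel_measurable_def using tm by measurable
    show "AE x in lebesgue. x \<in> ball x0 R \<longrightarrow>
      norm (norm (t x - A *v x - b) powr q) \<le> norm (2 powr q * (norm (t x) powr q + c powr q))"
      using bnd by (auto intro!: AE_I2 order_trans[OF _ abs_ge_self])
  qed
qed



lemma root_le:
  fixes a b e :: real
  assumes "a \<ge> 0" "b \<ge> 0" "e > 0" "a powr e \<le> b"
  shows "a \<le> b powr (1 / e)"
proof -
  have "a = (a powr e) powr (1 / e)" using assms by (simp add: powr_powr)
  also have "\<dots> \<le> b powr (1 / e)" using assms by (intro powr_mono2) auto
  finally show ?thesis .
qed

lemma caseA:
  fixes \<delta> R P q c0 \<kappa> c1 :: real and n :: nat
  assumes q: "q \<ge> 1" and R: "R > 0" and d: "\<delta> > 0" and c: "c0 > 0" "\<kappa> > 0" "c1 > 0" and P: "P \<ge> 0"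
    and hyp: "(c0 * \<delta>) powr q * (\<kappa> * (c1 * \<delta>) / R) ^ n \<le> R powr q * P"
  shows "\<delta> \<le> (c0 powr q * \<kappa> ^ n * c1 ^ n) powr (- 1 / (n + q)) * R * P powr (1 / (n + q))"
proof -
  define Da where "Da = c0 powr q * \<kappa> ^ n * c1 ^ n"
  have Da: "Da > 0" using c by (simp add: Da_def)
  have N: "n + q > 0" using q by simp
  have "(c0 * \<delta>) powr q * (\<kappa> * (c1 * \<delta>) / R) ^ n = Da * (\<delta> powr q * \<delta> ^ n) / R ^ n"
    using c d by (simp add: Da_def powr_mult power_mult_distrib power_divide field_simps)
  also have "\<delta> powr q * \<delta> ^ n = \<delta> powr (n + q)"
    using d by (simp add: powr_add powr_realpow)
  finally have "Da * \<delta> powr (n + q) / R ^ n \<le> R powr q * P" using hyp by simp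
  then have "Da * \<delta> powr (n + q) \<le> R powr q * P * R ^ n" using R by (simp add: divide_le_eq)
  also have "R powr q * P * R ^ n = R powr (n + q) * P" using R by (simp add: powr_add powr_realpow)
  finally have "\<delta> powr (n + q) \<le> R powr (n + q) * P / Da" using Da by (simp add: le_divide_eq mult.commute)
  then have "\<delta> \<le> (R powr (n + q) * P / Da) powr (1 / (n + q))"
    using d R P Da N by (intro root_le) auto
  also have "\<dots> = R * P powr (1 / (n + q)) * Da powr (- 1 / (n + q))"
    using R P Da N by (simp add: powr_divide powr_mult powr_powr powr_minus_divide divide_inverse inverse_powr)
  finally show ?thesis by (simp add: Da_def mult_ac)
qed

lemma caseB:
  fixes \<delta> R P q c0 \<kappa> \<gamma> :: real and n :: nat
  assumes q: "q \<ge> 1" and R: "R > 0" and d: "\<delta> > 0" and c: "c0 > 0" "\<kappa> > 0" "\<gamma> > 0" and P: "P \<ge> 0"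
    and hyp: "(c0 * \<delta>) powr q * (\<kappa> * (\<gamma> * R) / R) ^ n \<le> R powr q * P"
  shows "\<delta> \<le> (c0 powr q * \<kappa> ^ n) powr (- 1 / q) * \<gamma> powr (- n / q) * R * P powr (1 / q)"
proof -
  define Db where "Db = c0 powr q * \<kappa> ^ n"
  have Db: "Db > 0" using c by (simp add: Db_def)
  have "(c0 * \<delta>) powr q * (\<kappa> * (\<gamma> * R) / R) ^ n = (Db * \<gamma> ^ n) * \<delta> powr q"
    using c d R by (simp add: Db_def powr_mult power_mult_distrib)
  then have "\<delta> powr q \<le> R powr q * P / (Db * \<gamma> ^ n)" using hyp Db c
    by (simp add: le_divide_eq mult.commute)
  then have "\<delta> \<le> (R powr q * P / (Db * \<gamma> ^ n)) powr (1 / q)"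
    using d R P Db c q by (intro root_le) auto
  also have "\<dots> = R * P powr (1 / q) * Db powr (- 1 / q) * \<gamma> powr (- n / q)"
    using R P Db c q by (simp add: powr_divide powr_mult powr_powr powr_minus_divide divide_inverse inverse_powr powr_realpow[symmetric] powr_powr)
  finally show ?thesis by (simp add: Db_def mult_ac)
qed



lemma final_alg:
  fixes \<delta> R I q c0 \<kappa> c1 \<gamma> :: real and n :: nat
  assumes q: "q \<ge> 1" and n: "n \<ge> 1" and R: "R > 0" and I: "I \<ge> 0"
    and c: "c0 > 0" "\<kappa> > 0" "c1 > 0" "\<gamma> > 0" and d: "\<delta> \<ge> 0"
    and hyp: "\<delta> > 0 \<Longrightarrow> (c0 * \<delta>) powr q * (\<kappa> * min (\<gamma> * R) (c1 * \<delta>) / R) ^ n \<le> I"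
  shows "(I powr (1 / q) \<le> \<gamma> powr ((n + q) / q) * R \<longrightarrow>
           \<delta> \<le> ((c0 powr q * \<kappa> ^ n * c1 ^ n) powr (- 1 / (n + q)) + (c0 powr q * \<kappa> ^ n) powr (- 1 / q))
                 * R * (R powr (- q) * I) powr (1 / (n + q))) \<and>
         (I powr (1 / q) \<ge> \<gamma> powr ((n + q) / q) * R \<longrightarrow>
           \<delta> \<le> ((c0 powr q * \<kappa> ^ n * c1 ^ n) powr (- 1 / (n + q)) * (\<gamma> powr ((n + q) / q)) powr (- real n / (n + q))
                  + (c0 powr q * \<kappa> ^ n) powr (- 1 / q) * \<gamma> powr (- real n / q))
                 * R * (R powr (- q) * I) powr (1 / q))"
proof -
  define N where "N = n + q"
  define P where "P = R powr (- q) * I"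
  define X where "X = P powr (1 / q)"
  define C where "C = \<gamma> powr (N / q)"
  define a where "a = (c0 powr q * \<kappa> ^ n * c1 ^ n) powr (- 1 / N)"
  define b where "b = (c0 powr q * \<kappa> ^ n) powr (- 1 / q)"
  have N: "N > 0" "N = n + q" using q by (auto simp: N_def)
  have P: "P \<ge> 0" using I by (simp add: P_def)
  have X: "X \<ge> 0" by (simp add: X_def)
  have C: "C > 0" using c by (simp add: C_def)
  have a: "a \<ge> 0" and b: "b \<ge> 0" by (simp_all add: a_def b_def)
  have IP: "I = R powr q * P" using R by (simp add: P_def powr_minus)
  have Ipow: "I powr (1 / q) = R * X"
    using R P q by (simp add: IP X_def powr_mult powr_powr)
  have PN: "P powr (1 / N) = X powr (q / N)"
    using q N by (simp add: X_def powr_powr)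
  have gpos: "\<gamma> powr (- real n / q) > 0" using c by simp
  have XN: "X = X powr (q / N) * X powr (n / N)"
  proof (cases "X = 0")
    case False
    then have "X powr (q / N) * X powr (n / N) = X powr ((q + n) / N)" using X by (simp add: powr_add add_divide_distrib)
    also have "(q + n) / N = 1" using N by simp
    finally show ?thesis using X False by simp
  qed simp
  have main: "(R * X \<le> C * R \<longrightarrow> \<delta> \<le> (a + b) * R * X powr (q / N)) \<and>
              (C * R \<le> R * X \<longrightarrow> \<delta> \<le> (a * C powr (- real n / N) + b * \<gamma> powr (- real n / q)) * R * X)"
  proof (cases "\<delta> = 0")
    case True
    then show ?thesis using a b X R C gpos by (auto intro!: mult_nonneg_nonneg add_nonneg_nonneg)
  next
    case False
    then have d0: "\<delta> > 0" using d by simp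
    show ?thesis
    proof (cases "c1 * \<delta> \<le> \<gamma> * R")
      case True
      then have "min (\<gamma> * R) (c1 * \<delta>) = c1 * \<delta>" by simp
      then have "(c0 * \<delta>) powr q * (\<kappa> * (c1 * \<delta>) / R) ^ n \<le> R powr q * P"
        using hyp[OF d0] IP by metis
      from caseA[OF q R d0 c(1,2,3) P this]
      have dA: "\<delta> \<le> a * R * X powr (q / N)" by (simp add: a_def N_def PN[unfolded N_def])
      have 1: "\<delta> \<le> (a + b) * R * X powr (q / N)"
        using dA b R by (smt (verit) mult_nonneg_nonneg powr_ge_zero distrib_right)
      have 2: "\<delta> \<le> (a * C powr (- real n / N) + b * \<gamma> powr (- real n / q)) * R * X" if cx: "C * R \<le> R * X"
      proof -
        have XC: "C \<le> X" using cx R by simp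
        then have X0: "X > 0" using C by simp
        have "X powr (q / N) = X * X powr (- real n / N)"
        proof -
          have "X * X powr (- real n / N) = X powr 1 * X powr (- real n / N)" using X0 by simp
          also have "\<dots> = X powr (1 + (- real n / N))" by (rule powr_add[symmetric])
          also have "1 + (- real n / N) = q / N" using N by (simp add: field_simps)
          finally show ?thesis by simp
        qed
        also have "\<dots> \<le> X * C powr (- real n / N)"
          using XC C X0 N by (intro mult_left_mono powr_mono2') (auto simp: divide_nonpos_pos)
        finally have "a * R * X powr (q / N) \<le> a * R * (X * C powr (- real n / N))"
          using a R by (intro mult_left_mono) auto
        then have "\<delta> \<le> (a * C powr (- real n / N)) * R * X" using dA by (simp add: mult_ac)
        moreover have "0 \<le> b * \<gamma> powr (- real n / q) * R * X" using b R X by simp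
        ultimately show ?thesis by (simp add: distrib_right)
      qed
      show ?thesis using 1 2 by blast
    next
      case False
      then have "min (\<gamma> * R) (c1 * \<delta>) = \<gamma> * R" by simp
      then have "(c0 * \<delta>) powr q * (\<kappa> * (\<gamma> * R) / R) ^ n \<le> R powr q * P"
        using hyp[OF d0] IP by metis
      from caseB[OF q R d0 c(1,2,4) P this]
      have dB: "\<delta> \<le> b * \<gamma> powr (- real n / q) * R * X" by (simp add: b_def X_def)
      have 2: "\<delta> \<le> (a * C powr (- real n / N) + b * \<gamma> powr (- real n / q)) * R * X"
        using dB a R X C by (smt (verit) mult_nonneg_nonneg powr_ge_zero distrib_right)
      have 1: "\<delta> \<le> (a + b) * R * X powr (q / N)" if cx: "R * X \<le> C * R"
      proof -
        have XC: "X \<le> C" using cx R by simp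
        have "X powr (n / N) \<le> C powr (n / N)" using XC X N by (intro powr_mono2) auto
        also have "C powr (n / N) = \<gamma> powr (n / q)" using N q c by (simp add: C_def powr_powr)
        finally have "X \<le> X powr (q / N) * \<gamma> powr (n / q)"
          using XN by (metis mult_left_mono powr_ge_zero)
        then have "\<gamma> powr (- real n / q) * X \<le> X powr (q / N)"
          using c by (simp add: powr_minus_divide divide_le_eq mult.commute powr_minus)
        then have "b * R * (\<gamma> powr (- real n / q) * X) \<le> b * R * X powr (q / N)"
          using b R by (intro mult_left_mono) auto
        then have "\<delta> \<le> b * R * X powr (q / N)" using dB by (simp add: mult_ac)
        moreover have "0 \<le> a * R * X powr (q / N)" using a R by simp
        ultimately show ?thesis by (simp add: distrib_right)
      qed
      show ?thesis using 1 2 by blast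
    qed
  qed
  show ?thesis
    using main unfolding Ipow C_def[symmetric] N(2)[symmetric] a_def[symmetric] b_def[symmetric]
      P_def[symmetric] PN X_def[symmetric] by (simp add: mult.commute)
qed



lemma measure_ball_eq:
  fixes c :: "real^'n"
  assumes "r \<ge> 0"
  shows "measure lebesgue (ball c r) = r ^ CARD('n) * measure lebesgue (ball (0::real^'n) 1)"
  using content_ball_conv_unit_ball[OF assms, of c] by simp

lemma key_point:
  fixes h :: "real^'n \<Rightarrow> real" and A :: "real^'n^'n" and t :: "real^'n \<Rightarrow> real^'n"
  assumes C2: "C2_with h g H" and hom: "\<forall>s>0. \<forall>x. h (s *\<^sub>R x) = s powr p * h x"
    and hess: "\<forall>x v. norm x = 1 \<longrightarrow> lam * (norm v)\<^sup>2 \<le> (H x *v v) \<bullet> v \<and> (H x *v v) \<bullet> v \<le> Lam * (norm v)\<^sup>2"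
    and lam: "0 < lam" "lam \<le> Lam"
    and hm: "h_monotone h T"
    and ae: "AE x in lebesgue. T x = {t x}" and L: "Lloc (p - 1) t" and p: "p \<ge> 2"
    and M: "onorm (\<lambda>v. A *v v) = M" and R: "R > 0" and \<beta>: "0 < \<beta>" "\<beta> < 1"
    and x: "x \<in> ball x0 (\<beta> * R)" and tx: "t x \<in> T x"
    and d: "norm (t x - A *v x - b) > 0"
  shows "(lam / (6 * Lam) * norm (t x - A *v x - b)) powr (p - 1) *
           (lam / (2 * Lam) * min ((1 - \<beta>) / 2 * R) (lam / (9 * Lam * (M + 1)) * norm (t x - A *v x - b)) / R) ^ CARD('n)
         \<le> avg_int (ball x0 R) (\<lambda>x. norm (t x - A *v x - b) powr (p - 1))"
proof -
  define U where "U = t x - A *v x - b"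
  define \<delta> where "\<delta> = norm U"
  define \<gamma> where "\<gamma> = (1 - \<beta>) / 2"
  define c1 where "c1 = lam / (9 * Lam * (M + 1))"
  define \<kappa> where "\<kappa> = lam / (2 * Lam)"
  define c0 where "c0 = lam / (6 * Lam)"
  define \<rho> where "\<rho> = min (\<gamma> * R) (c1 * \<delta>)"
  define e where "e = (1 / norm U) *\<^sub>R U"
  define f where "f y = norm (t y - A *v y - b) powr (p - 1)" for y
  have Lpos: "Lam > 0" using lam by simp
  have M0: "M \<ge> 0" using M onorm_pos_le[OF matrix_vector_mul_bounded_linear[of A]] by simp
  have d0: "\<delta> > 0" using d by (simp add: \<delta>_def U_def)
  have g0: "\<gamma> > 0" using \<beta> by (simp add: \<gamma>_def)
  have c10: "c1 > 0" using lam M0 by (simp add: c1_def)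
  have k0: "\<kappa> > 0" "\<kappa> \<le> 1 / 2" using lam by (auto simp: \<kappa>_def field_simps)
  have rho0: "\<rho> > 0" using g0 R c10 d0 by (simp add: \<rho>_def)
  have ne: "norm e = 1" using d0 by (simp add: e_def \<delta>_def)
  have rhoM: "3 / 2 * M * \<rho> \<le> lam / (6 * Lam) * norm (t x - A *v x - b)"
  proof -
    have "3 / 2 * M * \<rho> \<le> 3 / 2 * (M + 1) * (c1 * \<delta>)"
      using M0 rho0 by (intro mult_mono) (auto simp: \<rho>_def)
    also have "\<dots> = 3 / 2 * (c1 * (M + 1)) * \<delta>" by (simp add: mult_ac)
    also have "c1 * (M + 1) = lam / (9 * Lam)" using M0 by (simp add: c1_def)
    also have "3 / 2 * (lam / (9 * Lam)) * \<delta> = lam / (6 * Lam) * \<delta>" by simp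
    finally show ?thesis by (simp add: \<delta>_def U_def)
  qed
  have sub: "ball (x + \<rho> *\<^sub>R e) (\<kappa> * \<rho>) \<subseteq> ball x0 R"
  proof
    fix y assume y: "y \<in> ball (x + \<rho> *\<^sub>R e) (\<kappa> * \<rho>)"
    have "dist x0 y \<le> dist x0 x + dist x (x + \<rho> *\<^sub>R e) + dist (x + \<rho> *\<^sub>R e) y"
      by (metis dist_triangle order_trans add_right_mono)
    also have "dist x (x + \<rho> *\<^sub>R e) = \<rho>" using ne rho0 by (simp add: dist_norm)
    also have "dist x0 x < \<beta> * R" using x by simp
    also have "dist (x + \<rho> *\<^sub>R e) y < \<kappa> * \<rho>" using y by simp
    finally have "dist x0 y < \<beta> * R + \<rho> + \<kappa> * \<rho>" by simp
    also have "\<dots> \<le> \<beta> * R + \<rho> + 1 / 2 * \<rho>" using k0 rho0 by simp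
    also have "\<dots> \<le> \<beta> * R + 3 / 2 * (\<gamma> * R)" by (simp add: \<rho>_def)
    also have "\<dots> < R" using \<beta> R by (simp add: \<gamma>_def field_simps)
    finally show "y \<in> ball x0 R" by simp
  qed
  have low: "AE y in lebesgue. y \<in> ball (x + \<rho> *\<^sub>R e) (\<kappa> * \<rho>) \<longrightarrow> (c0 * \<delta>) powr (p - 1) \<le> f y"
    using ae
  proof (rule AE_mp, intro AE_I2 impI)
    fix y assume Ty: "T y = {t y}" and y: "y \<in> ball (x + \<rho> *\<^sub>R e) (\<kappa> * \<rho>)"
    have ty: "t y \<in> T y" using Ty by simp
    have Ux: "t x - A *v x - b \<noteq> 0" using d by auto
    have y': "y \<in> ball (x + \<rho> *\<^sub>R ((1 / norm (t x - A *v x - b)) *\<^sub>R (t x - A *v x - b))) (lam / (2 * Lam) * \<rho>)"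
      using y by (simp add: e_def U_def \<kappa>_def)
    have "lam / (6 * Lam) * norm (t x - A *v x - b) \<le> norm (t y - A *v y - b)"
      by (rule pt_est[OF C2 hom hess lam hm tx ty M Ux rho0 rhoM y'])
    then have "c0 * \<delta> \<le> norm (t y - A *v y - b)" by (simp add: c0_def \<delta>_def U_def)
    then show "(c0 * \<delta>) powr (p - 1) \<le> f y" unfolding f_def
      using p d0 lam by (intro powr_mono2) (auto simp: c0_def)
  qed
  have il: "(c0 * \<delta>) powr (p - 1) * measure lebesgue (ball (x + \<rho> *\<^sub>R e) (\<kappa> * \<rho>)) \<le> (LINT y:ball x0 R|lebesgue. f y)"
  proof -
    have iu: "set_integrable lebesgue (ball x0 R) f"
      using integ_u[OF L, where A=A and b=b and ?x0.0=x0 and R=R] p unfolding f_def by simp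
    show ?thesis by (rule int_lower[OF iu _ sub low]) (simp add: f_def)
  qed
  define \<omega> where "\<omega> = measure lebesgue (ball (0::real^'n) 1)"
  have om: "\<omega> > 0" using content_ball_pos[of 1 "0::real^'n"] by (simp add: \<omega>_def)
  have m1: "measure lebesgue (ball (x + \<rho> *\<^sub>R e) (\<kappa> * \<rho>)) = (\<kappa> * \<rho>) ^ CARD('n) * \<omega>"
    unfolding \<omega>_def by (rule measure_ball_eq) (use k0 rho0 in simp)
  have m2: "measure lebesgue (ball x0 R) = R ^ CARD('n) * \<omega>"
    unfolding \<omega>_def by (rule measure_ball_eq) (use R in simp)
  have "(c0 * \<delta>) powr (p - 1) * (\<kappa> * \<rho> / R) ^ CARD('n)
      = (c0 * \<delta>) powr (p - 1) * ((\<kappa> * \<rho>) ^ CARD('n) * \<omega>) / (R ^ CARD('n) * \<omega>)"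
    using om R by (simp add: power_divide)
  also have "\<dots> \<le> (LINT y:ball x0 R|lebesgue. f y) / (R ^ CARD('n) * \<omega>)"
    using il m1 om R by (intro divide_right_mono) auto
  also have "\<dots> = avg_int (ball x0 R) f" by (simp add: avg_int_def m2)
  finally show ?thesis
    by (simp add: f_def[abs_def] c0_def \<delta>_def U_def \<kappa>_def \<rho>_def \<gamma>_def c1_def)
qed



theorem theorem3p1:
  fixes p :: real
  assumes "p \<ge> 2"
  shows "\<exists>C :: real \<Rightarrow> real. (\<forall>\<beta>\<in>{0<..<1}. C \<beta> > 0) \<and>
    (\<forall>lam Lam M. 0 < lam \<and> lam \<le> Lam \<and> M \<ge> 0 \<longrightarrow>
      (\<exists>K1 > 0. \<forall>\<beta>\<in>{0<..<1}. \<exists>K2 > 0.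
        \<forall>(h :: real^'n \<Rightarrow> real) g H (T :: real^'n \<Rightarrow> (real^'n) set) (t :: real^'n \<Rightarrow> real^'n)
          (A :: real^'n^'n) (b :: real^'n) x0 R.
          C2_with h g H \<and>
          (\<forall>x. h x \<ge> 0) \<and>
          (\<forall>s>0. \<forall>x. h (s *\<^sub>R x) = s powr p * h x) \<and>
          (\<forall>x v. norm x = 1 \<longrightarrow> lam * (norm v)\<^sup>2 \<le> (H x *v v) \<bullet> v \<and> (H x *v v) \<bullet> v \<le> Lam * (norm v)\<^sup>2) \<and>
          h_monotone h T \<and>
          (AE x in lebesgue. T x = {t x}) \<and> Lloc (p - 1) t \<and>
          onorm (\<lambda>v. A *v v) = M \<and> R > 0
          \<longrightarrow>
          (let u = (\<lambda>x. t x - A *v x - b);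
               I = avg_int (ball x0 R) (\<lambda>x. norm (u x) powr (p - 1));
               n = real CARD('n)
           in (I powr (1 / (p - 1)) \<le> C \<beta> * R \<longrightarrow>
                 (AE x in lebesgue. x \<in> ball x0 (\<beta> * R) \<longrightarrow>
                    norm (u x) \<le> K1 * R * (R powr (-(p - 1)) * I) powr (1 / (n + p - 1)))) \<and>
              (I powr (1 / (p - 1)) \<ge> C \<beta> * R \<longrightarrow>
                 (AE x in lebesgue. x \<in> ball x0 (\<beta> * R) \<longrightarrow>
                    norm (u x) \<le> K2 * R * (R powr (-(p - 1)) * I) powr (1 / (p - 1)))))))"
proof -
  define q where "q = p - 1"
  define nn where "nn = CARD('n)"
  have q1: "q \<ge> 1" using assms by (simp add: q_def)
  have nn1: "nn \<ge> 1" by (simp add: nn_def Suc_le_eq)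
  define C :: "real \<Rightarrow> real" where "C \<beta> = ((1 - \<beta>) / 2) powr ((real nn + q) / q)" for \<beta>
  have Cpos: "\<forall>\<beta>\<in>{0<..<1}. C \<beta> > 0" by (auto simp: C_def)
  have main: "\<forall>lam Lam M. 0 < lam \<and> lam \<le> Lam \<and> M \<ge> 0 \<longrightarrow>
      (\<exists>K1 > 0. \<forall>\<beta>\<in>{0<..<1}. \<exists>K2 > 0.
        \<forall>(h :: real^'n \<Rightarrow> real) g H (T :: real^'n \<Rightarrow> (real^'n) set) (t :: real^'n \<Rightarrow> real^'n)
          (A :: real^'n^'n) (b :: real^'n) x0 R.
          C2_with h g H \<and>
          (\<forall>x. h x \<ge> 0) \<and>
          (\<forall>s>0. \<forall>x. h (s *\<^sub>R x) = s powr p * h x) \<and>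
          (\<forall>x v. norm x = 1 \<longrightarrow> lam * (norm v)\<^sup>2 \<le> (H x *v v) \<bullet> v \<and> (H x *v v) \<bullet> v \<le> Lam * (norm v)\<^sup>2) \<and>
          h_monotone h T \<and>
          (AE x in lebesgue. T x = {t x}) \<and> Lloc (p - 1) t \<and>
          onorm (\<lambda>v. A *v v) = M \<and> R > 0
          \<longrightarrow>
          (let u = (\<lambda>x. t x - A *v x - b);
               I = avg_int (ball x0 R) (\<lambda>x. norm (u x) powr (p - 1));
               n = real CARD('n)
           in (I powr (1 / (p - 1)) \<le> C \<beta> * R \<longrightarrow>
                 (AE x in lebesgue. x \<in> ball x0 (\<beta> * R) \<longrightarrow>
                    norm (u x) \<le> K1 * R * (R powr (-(p - 1)) * I) powr (1 / (n + p - 1)))) \<and>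
              (I powr (1 / (p - 1)) \<ge> C \<beta> * R \<longrightarrow>
                 (AE x in lebesgue. x \<in> ball x0 (\<beta> * R) \<longrightarrow>
                    norm (u x) \<le> K2 * R * (R powr (-(p - 1)) * I) powr (1 / (p - 1))))))"
  proof (intro allI impI)
    fix lam Lam M :: real
    assume lLM: "0 < lam \<and> lam \<le> Lam \<and> M \<ge> 0"
    then have lam: "0 < lam" "lam \<le> Lam" and M0: "M \<ge> 0" by auto
    define c0 where "c0 = lam / (6 * Lam)"
    define \<kappa> where "\<kappa> = lam / (2 * Lam)"
    define c1 where "c1 = lam / (9 * Lam * (M + 1))"
    define ka where "ka = (c0 powr q * \<kappa> ^ nn * c1 ^ nn) powr (- 1 / (nn + q))"
    define kb where "kb = (c0 powr q * \<kappa> ^ nn) powr (- 1 / q)"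
    define K1 where "K1 = ka + kb"
    have cpos: "c0 > 0" "\<kappa> > 0" "c1 > 0" using lam M0 by (auto simp: c0_def \<kappa>_def c1_def)
    have ka: "ka > 0" using cpos by (simp add: ka_def)
    have kb: "kb > 0" using cpos by (simp add: kb_def)
    have K1: "K1 > 0" using ka kb by (simp add: K1_def)
    show "\<exists>K1 > 0. \<forall>\<beta>\<in>{0<..<1}. \<exists>K2 > 0.
        \<forall>(h :: real^'n \<Rightarrow> real) g H (T :: real^'n \<Rightarrow> (real^'n) set) (t :: real^'n \<Rightarrow> real^'n)
          (A :: real^'n^'n) (b :: real^'n) x0 R.
          C2_with h g H \<and>
          (\<forall>x. h x \<ge> 0) \<and>
          (\<forall>s>0. \<forall>x. h (s *\<^sub>R x) = s powr p * h x) \<and>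
          (\<forall>x v. norm x = 1 \<longrightarrow> lam * (norm v)\<^sup>2 \<le> (H x *v v) \<bullet> v \<and> (H x *v v) \<bullet> v \<le> Lam * (norm v)\<^sup>2) \<and>
          h_monotone h T \<and>
          (AE x in lebesgue. T x = {t x}) \<and> Lloc (p - 1) t \<and>
          onorm (\<lambda>v. A *v v) = M \<and> R > 0
          \<longrightarrow>
          (let u = (\<lambda>x. t x - A *v x - b);
               I = avg_int (ball x0 R) (\<lambda>x. norm (u x) powr (p - 1));
               n = real CARD('n)
           in (I powr (1 / (p - 1)) \<le> C \<beta> * R \<longrightarrow>
                 (AE x in lebesgue. x \<in> ball x0 (\<beta> * R) \<longrightarrow>
                    norm (u x) \<le> K1 * R * (R powr (-(p - 1)) * I) powr (1 / (n + p - 1)))) \<and>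
              (I powr (1 / (p - 1)) \<ge> C \<beta> * R \<longrightarrow>
                 (AE x in lebesgue. x \<in> ball x0 (\<beta> * R) \<longrightarrow>
                    norm (u x) \<le> K2 * R * (R powr (-(p - 1)) * I) powr (1 / (p - 1)))))"
    proof (rule exI[of _ K1], intro conjI K1 ballI)
      fix \<beta> :: real assume \<beta>: "\<beta> \<in> {0<..<1}"
      define \<gamma> where "\<gamma> = (1 - \<beta>) / 2"
      have g0: "\<gamma> > 0" using \<beta> by (simp add: \<gamma>_def)
      have C\<gamma>: "C \<beta> = \<gamma> powr ((real nn + q) / q)" by (simp add: C_def \<gamma>_def)
      define K2 where "K2 = ka * (C \<beta>) powr (- real nn / (real nn + q)) + kb * \<gamma> powr (- real nn / q)"
      have "C \<beta> > 0" using Cpos \<beta> by blast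
      then have K2: "K2 > 0" using ka kb g0 unfolding K2_def
        by (intro add_pos_pos mult_pos_pos) auto
      show "\<exists>K2 > 0.
        \<forall>(h :: real^'n \<Rightarrow> real) g H (T :: real^'n \<Rightarrow> (real^'n) set) (t :: real^'n \<Rightarrow> real^'n)
          (A :: real^'n^'n) (b :: real^'n) x0 R.
          C2_with h g H \<and>
          (\<forall>x. h x \<ge> 0) \<and>
          (\<forall>s>0. \<forall>x. h (s *\<^sub>R x) = s powr p * h x) \<and>
          (\<forall>x v. norm x = 1 \<longrightarrow> lam * (norm v)\<^sup>2 \<le> (H x *v v) \<bullet> v \<and> (H x *v v) \<bullet> v \<le> Lam * (norm v)\<^sup>2) \<and>
          h_monotone h T \<and>
          (AE x in lebesgue. T x = {t x}) \<and> Lloc (p - 1) t \<and>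
          onorm (\<lambda>v. A *v v) = M \<and> R > 0
          \<longrightarrow>
          (let u = (\<lambda>x. t x - A *v x - b);
               I = avg_int (ball x0 R) (\<lambda>x. norm (u x) powr (p - 1));
               n = real CARD('n)
           in (I powr (1 / (p - 1)) \<le> C \<beta> * R \<longrightarrow>
                 (AE x in lebesgue. x \<in> ball x0 (\<beta> * R) \<longrightarrow>
                    norm (u x) \<le> K1 * R * (R powr (-(p - 1)) * I) powr (1 / (n + p - 1)))) \<and>
              (I powr (1 / (p - 1)) \<ge> C \<beta> * R \<longrightarrow>
                 (AE x in lebesgue. x \<in> ball x0 (\<beta> * R) \<longrightarrow>
                    norm (u x) \<le> K2 * R * (R powr (-(p - 1)) * I) powr (1 / (p - 1)))))"
      proof (rule exI[of _ K2], intro conjI K2 allI impI)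
        fix h :: "real^'n \<Rightarrow> real" and g H and T :: "real^'n \<Rightarrow> (real^'n) set"
          and t :: "real^'n \<Rightarrow> real^'n" and A :: "real^'n^'n" and b :: "real^'n" and x0 :: "real^'n" and R :: real
        assume hyps: "C2_with h g H \<and>
          (\<forall>x. h x \<ge> 0) \<and>
          (\<forall>s>0. \<forall>x. h (s *\<^sub>R x) = s powr p * h x) \<and>
          (\<forall>x v. norm x = 1 \<longrightarrow> lam * (norm v)\<^sup>2 \<le> (H x *v v) \<bullet> v \<and> (H x *v v) \<bullet> v \<le> Lam * (norm v)\<^sup>2) \<and>
          h_monotone h T \<and>
          (AE x in lebesgue. T x = {t x}) \<and> Lloc (p - 1) t \<and>
          onorm (\<lambda>v. A *v v) = M \<and> R > 0"
        then have C2: "C2_with h g H"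
          and hom: "\<forall>s>0. \<forall>x. h (s *\<^sub>R x) = s powr p * h x"
          and hess: "\<forall>x v. norm x = 1 \<longrightarrow> lam * (norm v)\<^sup>2 \<le> (H x *v v) \<bullet> v \<and> (H x *v v) \<bullet> v \<le> Lam * (norm v)\<^sup>2"
          and hm: "h_monotone h T" and ae: "AE x in lebesgue. T x = {t x}" and L: "Lloc (p - 1) t"
          and M: "onorm (\<lambda>v. A *v v) = M" and R: "R > 0"
          by auto
        define I where "I = avg_int (ball x0 R) (\<lambda>x. norm (t x - A *v x - b) powr (p - 1))"
        have I0: "I \<ge> 0" unfolding I_def avg_int_def set_lebesgue_integral_def
          by (intro divide_nonneg_nonneg Bochner_Integration.integral_nonneg) auto
        have pw: "(I powr (1 / q) \<le> \<gamma> powr ((real nn + q) / q) * R \<longrightarrow>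
             norm (t x - A *v x - b) \<le> (ka + kb) * R * (R powr (- q) * I) powr (1 / (real nn + q))) \<and>
           (I powr (1 / q) \<ge> \<gamma> powr ((real nn + q) / q) * R \<longrightarrow>
             norm (t x - A *v x - b) \<le> (ka * (\<gamma> powr ((real nn + q) / q)) powr (- real nn / (real nn + q))
                  + kb * \<gamma> powr (- real nn / q)) * R * (R powr (- q) * I) powr (1 / q))"
          if Tx: "T x = {t x}" and x: "x \<in> ball x0 (\<beta> * R)" for x
        proof -
          have hy: "(c0 * norm (t x - A *v x - b)) powr q *
              (\<kappa> * min (\<gamma> * R) (c1 * norm (t x - A *v x - b)) / R) ^ nn \<le> I"
            if d: "norm (t x - A *v x - b) > 0"
            using key_point[OF C2 hom hess lam hm ae L assms M R _ _ x _ d] \<beta> Tx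
            by (simp add: I_def c0_def \<kappa>_def c1_def \<gamma>_def q_def nn_def)
          note fa = final_alg[OF q1 nn1 R I0 cpos g0 norm_ge_zero hy]
          show ?thesis using fa unfolding ka_def kb_def by blast
        qed
        have e1: "real CARD('n) + p - 1 = real nn + q" by (simp add: nn_def q_def)
        show "let u = (\<lambda>x. t x - A *v x - b);
               I = avg_int (ball x0 R) (\<lambda>x. norm (u x) powr (p - 1));
               n = real CARD('n)
           in (I powr (1 / (p - 1)) \<le> C \<beta> * R \<longrightarrow>
                 (AE x in lebesgue. x \<in> ball x0 (\<beta> * R) \<longrightarrow>
                    norm (u x) \<le> K1 * R * (R powr (-(p - 1)) * I) powr (1 / (n + p - 1)))) \<and>
              (I powr (1 / (p - 1)) \<ge> C \<beta> * R \<longrightarrow>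
                 (AE x in lebesgue. x \<in> ball x0 (\<beta> * R) \<longrightarrow>
                    norm (u x) \<le> K2 * R * (R powr (-(p - 1)) * I) powr (1 / (p - 1))))"
          unfolding Let_def unfolding I_def[symmetric] unfolding e1 q_def[symmetric] K1_def K2_def C\<gamma>
          apply (intro conjI impI)
          subgoal by (rule AE_mp[OF ae], rule AE_I2) (use pw in auto)
          subgoal by (rule AE_mp[OF ae], rule AE_I2) (use pw in auto)
          done
      qed
    qed
  qed
  show ?thesis using Cpos main by blast
qed

end
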